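(* Let $0<a<b$. For every $x\in[0,1]$, $$-\log g_{a,b}(x)=\frac{1}{b-a}\sum_{n\ge1}\Bigl(\tfrac{a}{b-a}n+1\Bigr)_{n-1}\frac{(x^a-x^b)^n}{n!},$$ the series converging absolutely. In particular, for $x\in[(a/b)^{1/(b-a)},1]$ the right-hand side equals $-\log x$, and for $x\in[0,(a/b)^{1/(b-a)}]$ it equals $-\log f_{a,b}(x)$.
   Context: $(c)_n=\Gamma(c+n)/\Gamma(c)$ is the Pochhammer symbol. For $0<a<b$ let $\phi_{a,b}(x)=x^a-x^b$ on $[0,1]$; it is strictly increasing on $[0,x_0]$ and strictly decreasing on $[x_0,1]$, where $x_0=(a/b)^{1/(b-a)}$. Let $l_{a,b},r_{a,b}$ be its restrictions to $[0,x_0]$ and $[x_0,1]$. Define $f_{a,b}(x)=r_{a,b}^{-1}(\phi_{a,b}(x))$ for $0\le x\le x_0$, $f_{a,b}(x)=l_{a,b}^{-1}(\phi_{a,b}(x))$ for $x_0\le x\le1$, and $g_{a,b}(x)=r_{a,b}^{-1}(\phi_{a,b}(x))$ for $0\le x\le1$ (so $g_{a,b}=f_{a,b}$ on $[0,x_0]$ and $g_{a,b}(x)=x$ on $[x_0,1]$). *)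

theory Defs
  imports "HOL-Analysis.Analysis"
begin

definition phi :: "real \<Rightarrow> real \<Rightarrow> real \<Rightarrow> real" where
  "phi a b x = x powr a - x powr b"

definition x0 :: "real \<Rightarrow> real \<Rightarrow> real" where
  "x0 a b = (a / b) powr (1 / (b - a))"

definition linv :: "real \<Rightarrow> real \<Rightarrow> real \<Rightarrow> real" where
  "linv a b = inv_into {0..x0 a b} (phi a b)"

definition rinv :: "real \<Rightarrow> real \<Rightarrow> real \<Rightarrow> real" where
  "rinv a b = inv_into {x0 a b..1} (phi a b)"

definition f_ab :: "real \<Rightarrow> real \<Rightarrow> real \<Rightarrow> real" where
  "f_ab a b x = (if x \<le> x0 a b then rinv a b (phi a b x) else linv a b (phi a b x))"

definition g_ab :: "real \<Rightarrow> real \<Rightarrow> real \<Rightarrow> real" where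
  "g_ab a b x = rinv a b (phi a b x)"

definition series_term :: "real \<Rightarrow> real \<Rightarrow> real \<Rightarrow> nat \<Rightarrow> real" where
  "series_term a b x n =
     pochhammer (a / (b - a) * real n + 1) (n - 1) * (x powr a - x powr b) ^ n / fact n"

end

theory Submission
  imports Defs "HOL-Computational_Algebra.Formal_Laurent_Series" "HOL-Computational_Algebra.Polynomial_FPS"
begin
unbundle fps_syntax


definition Ep :: "real \<Rightarrow> real fps" where
  "Ep d = Abs_fps (\<lambda>k. pochhammer d k / fact k)"

lemma Ep_nth: "Ep d $ k = pochhammer d k / fact k"
  by (simp add: Ep_def)

lemma Ep_gchoose: "Ep d $ k = (-1)^k * ((-d) gchoose k)"
  by (simp add: Ep_def gbinomial_pochhammer)

lemma Ep_mult: "Ep d1 * Ep d2 = Ep (d1 + d2)"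
proof (rule fps_ext)
  fix n
  have "(Ep d1 * Ep d2) $ n = (\<Sum>i=0..n. (-1)^n * (((-d1) gchoose i) * ((-d2) gchoose (n - i))))"
    unfolding fps_mult_nth Ep_gchoose
    by (intro sum.cong refl) (simp add: power_add[symmetric])
  also have "\<dots> = (-1)^n * ((-d1 + -d2) gchoose n)"
    by (simp add: sum_distrib_left[symmetric] gbinomial_Vandermonde)
  finally show "(Ep d1 * Ep d2) $ n = Ep (d1 + d2) $ n"
    by (simp add: Ep_gchoose)
qed

lemma Ep_0: "Ep 0 = 1"
  by (rule fps_ext) (simp add: Ep_nth pochhammer_0_left)

lemma Ep_nth0 [simp]: "Ep d $ 0 = 1"
  by (simp add: Ep_nth)

lemma Ep_power: "Ep d ^ n = Ep (of_nat n * d)"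
  by (induction n) (simp_all add: Ep_0 Ep_mult algebra_simps)

lemma Ep_nonneg: assumes "d \<ge> 0" shows "Ep d $ k \<ge> 0"
proof (cases "d = 0")
  case True then show ?thesis by (simp add: Ep_nth pochhammer_0_left)
next
  case False then have "d > 0" using assms by simp
  then show ?thesis unfolding Ep_nth by (intro divide_nonneg_pos pochhammer_nonneg) auto
qed


definition PP :: "real \<Rightarrow> real fps" where "PP al = fps_X * Ep (-al)"
definition pl :: "real \<Rightarrow> real fls" where "pl al = fps_to_fls (PP al)"
definition ipl :: "real \<Rightarrow> real fls" where "ipl al = fls_shift 1 (fps_to_fls (Ep al))"

lemma PP_0 [simp]: "PP al $ 0 = 0" by (simp add: PP_def)
lemma PP_1 [simp]: "PP al $ 1 = 1" by (simp add: PP_def)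
lemma PP_1' [simp]: "PP al $ Suc 0 = 1" by (simp add: PP_def)

lemma pl_shift: "pl al = fls_shift (-1) (fps_to_fls (Ep (-al)))"
  by (simp add: pl_def PP_def fls_times_fps_to_fls fls_X_times_conv_shift)

lemma pl_ipl: "pl al * ipl al = 1"
proof -
  have "pl al * ipl al = fps_to_fls (Ep (-al) * Ep al)"
    by (simp add: pl_shift ipl_def fls_shifted_times_simps fls_times_fps_to_fls)
  also have "\<dots> = 1" by (simp add: Ep_mult Ep_0)
  finally show ?thesis .
qed

lemma pl_nz: "pl al \<noteq> 0" using pl_ipl[of al] by auto

lemma inverse_pl: "inverse (pl al) = ipl al"
  using pl_ipl[of al] by (simp add: inverse_unique)

lemma ipl_power: "ipl al ^ n = fls_shift (int n) (fps_to_fls (Ep (of_nat n * al)))"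
  by (simp add: ipl_def fls_shifted_pow Ep_power flip: fps_to_fls_power)

lemma res_shift:
  fixes A B :: "real fps"
  assumes "n \<ge> 1"
  shows "fls_residue (fps_to_fls A * fls_shift (int n) (fps_to_fls B)) = (A * B) $ (n - 1)"
proof -
  have "fps_to_fls A * fls_shift (int n) (fps_to_fls B) = fls_shift (int n) (fps_to_fls (A * B))"
    by (subst fls_shifted_times_simps(1)) (simp add: fls_times_fps_to_fls)
  moreover have "nat (-1 + int n) = n - 1" using assms by simp
  ultimately show ?thesis using assms by simp
qed

lemma pow_ipl_cancel: "pl al ^ i * ipl al ^ (i + k) = ipl al ^ k"
proof -
  have "pl al ^ i * ipl al ^ (i + k) = (pl al * ipl al) ^ i * ipl al ^ k"
    by (simp add: power_add power_mult_distrib)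
  then show ?thesis by (simp add: pl_ipl)
qed

definition Phi :: "real \<Rightarrow> nat \<Rightarrow> real fps \<Rightarrow> real" where
  "Phi al n F = fls_residue (fls_deriv (fps_to_fls F) * ipl al ^ n)"

lemma Phi_add: "Phi al n (F + H) = Phi al n F + Phi al n H"
  by (simp add: Phi_def distrib_right)

lemma Phi_zero: "Phi al n 0 = 0"
  by (simp add: Phi_def)

lemma Phi_cmult: "Phi al n (fps_const c * F) = c * Phi al n F"
proof -
  have "Phi al n (fps_const c * F) = fls_residue (fls_const c * (fls_deriv (fps_to_fls F) * ipl al ^ n))"
    by (simp add: Phi_def fls_times_fps_to_fls mult.assoc)
  then show ?thesis by (simp only: fls_residue_fls_const_times Phi_def)
qed

lemma Phi_sum: "Phi al n (\<Sum>j\<in>S. f j) = (\<Sum>j\<in>S. Phi al n (f j))"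
proof (induction S rule: infinite_finite_induct)
  case (infinite A) then show ?case by (simp add: Phi_zero)
next
  case empty then show ?case by (simp add: Phi_zero)
next
  case (insert x F) then show ?case by (simp add: Phi_add)
qed

lemma Phi_pow_less:
  assumes "j < n"
  shows "Phi al n (PP al ^ j) = 0"
proof (cases j)
  case 0 then show ?thesis by (simp add: Phi_def)
next
  case (Suc i)
  obtain m where n: "n = Suc i + Suc m" using assms Suc by (metis add_Suc_right less_imp_Suc_add)
  define D where "D = fls_deriv (pl al)"
  have dip: "fls_deriv (ipl al) = - D * ipl al ^ 2"
    using fls_inverse_deriv[of "pl al"] by (simp add: inverse_pl D_def)
  have dj: "fls_deriv (pl al ^ j) = of_nat j * pl al ^ i * D"
    using fls_deriv_power[of "pl al" j] by (simp add: Suc D_def)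
  have "fls_deriv (pl al ^ j) * ipl al ^ n = of_nat j * D * (pl al ^ i * ipl al ^ (i + Suc (Suc m)))"
    unfolding dj n by (simp add: algebra_simps)
  also have "\<dots> = of_nat j * D * ipl al ^ Suc (Suc m)"
    by (simp only: pow_ipl_cancel)
  also have "\<dots> = fls_deriv (fls_const (- of_nat j / of_nat (Suc m)) * ipl al ^ Suc m)"
  proof -
    have e1: "fls_deriv (ipl al ^ Suc m) = fls_const (of_nat (Suc m)) * ipl al ^ m * (- D * ipl al ^ 2)"
      using fls_deriv_power[of "ipl al" "Suc m"] by (simp only: dip fls_of_nat diff_Suc_1)
    have e2: "fls_const (- of_nat j / of_nat (Suc m)) * fls_const (of_nat (Suc m)) = - fls_const (of_nat j :: real)"
      by (simp add: fls_const_mult_const del: of_nat_Suc)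
    have "fls_deriv (fls_const (- of_nat j / of_nat (Suc m)) * ipl al ^ Suc m)
       = (fls_const (- of_nat j / of_nat (Suc m)) * fls_const (of_nat (Suc m))) * (ipl al ^ m * (- D * ipl al ^ 2))"
      by (simp only: fls_deriv_mult_const_left e1 mult.assoc)
    also have "\<dots> = fls_const (of_nat j) * D * ipl al ^ Suc (Suc m)"
      by (simp only: e2) (simp add: algebra_simps power2_eq_square)
    finally show ?thesis by (simp add: fls_of_nat)
  qed
  finally have eq: "fls_deriv (pl al ^ j) * ipl al ^ n = fls_deriv (fls_const (- of_nat j / of_nat (Suc m)) * ipl al ^ Suc m)" .
  show ?thesis
    by (simp only: Phi_def fps_to_fls_power pl_def[symmetric] eq fls_residue_deriv)
qed


lemma Phi_pow_eq:
  assumes "n \<ge> 1"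
  shows "Phi al n (PP al ^ n) = of_nat n"
proof -
  define D where "D = fls_deriv (pl al)"
  obtain i where n: "n = Suc i" using assms by (cases n) auto
  have dj: "fls_deriv (pl al ^ n) = of_nat n * pl al ^ i * D"
    using fls_deriv_power[of "pl al" n] by (simp add: n D_def)
  have "fls_deriv (pl al ^ n) * ipl al ^ n = of_nat n * (D * (pl al ^ i * ipl al ^ (i + 1)))"
    unfolding dj by (simp add: n algebra_simps del: power_Suc)
  also have "\<dots> = fls_const (of_nat n) * (D * ipl al)"
    by (simp only: pow_ipl_cancel power_one_right fls_of_nat)
  finally have eq: "fls_deriv (pl al ^ n) * ipl al ^ n = fls_const (of_nat n) * (D * ipl al)" .
  have "fls_residue (D * ipl al) = (fps_deriv (PP al) * Ep al) $ 0"
    using res_shift[of 1 "fps_deriv (PP al)" "Ep al"]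
    by (simp add: D_def pl_def fls_deriv_fps_to_fls ipl_def del: fls_residue_def)
  also have "\<dots> = 1" by simp
  finally have r: "fls_residue (D * ipl al) = 1" .
  show ?thesis
    by (simp only: Phi_def fps_to_fls_power pl_def[symmetric] eq fls_residue_fls_const_times r)
qed

lemma Phi_tail: "Phi al n (PP al ^ Suc n * Q) = 0"
proof -
  define D where "D = fls_deriv (pl al)"
  define q where "q = fps_to_fls Q"
  have dj: "fls_deriv (pl al ^ Suc n) = of_nat (Suc n) * pl al ^ n * D"
    using fls_deriv_power[of "pl al" "Suc n"] by (simp add: D_def)
  have c: "pl al ^ n * ipl al ^ n = 1" using pow_ipl_cancel[of al n 0] by simp
  have "fls_deriv (pl al ^ Suc n * q) * ipl al ^ n
      = of_nat (Suc n) * D * q * (pl al ^ n * ipl al ^ n) + pl al * fls_deriv q * (pl al ^ n * ipl al ^ n)"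
    unfolding fls_deriv_mult dj by (simp add: algebra_simps del: of_nat_Suc)
  also have "\<dots> = fps_to_fls (of_nat (Suc n) * fps_deriv (PP al) * Q + PP al * fps_deriv Q)"
    by (simp only: c mult_1_right) (simp add: D_def q_def pl_def fls_deriv_fps_to_fls fls_times_fps_to_fls fps_to_fls_of_nat del: of_nat_Suc)
  finally have eq: "fls_deriv (pl al ^ Suc n * q) * ipl al ^ n = fps_to_fls (of_nat (Suc n) * fps_deriv (PP al) * Q + PP al * fps_deriv Q)" .
  show ?thesis
    by (simp only: Phi_def fls_times_fps_to_fls fps_to_fls_power pl_def[symmetric] q_def[symmetric] eq) simp
qed

lemma fps_split_at:
  fixes K :: "real fps"
  shows "K = (\<Sum>j<Suc n. fps_const (K $ j) * fps_X ^ j) + fps_X ^ Suc n * fps_shift (Suc n) K"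
proof (rule fps_ext)
  fix m
  have c: "(fps_const (K $ j) * fps_X ^ j) $ m = (if j = m then K $ m else 0)" for j
    by (simp add: fps_X_power_mult_right_nth)
  have s: "(\<Sum>j<Suc n. fps_const (K $ j) * fps_X ^ j) $ m = (if m < Suc n then K $ m else 0)"
    by (simp only: fps_sum_nth c sum.delta) simp
  show "K $ m = ((\<Sum>j<Suc n. fps_const (K $ j) * fps_X ^ j) + fps_X ^ Suc n * fps_shift (Suc n) K) $ m"
    by (simp only: fps_add_nth s fps_X_power_mult_nth) auto
qed

lemma lagrange:
  fixes Y :: "real fps"
  assumes Y0: "Y $ 0 = 0" and n: "n \<ge> 1"
  shows "of_nat n * (Y oo fps_inv (PP al)) $ n = Phi al n Y"
proof -
  define G where "G = fps_inv (PP al)"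
  define K where "K = Y oo G"
  have G0: "G $ 0 = 0" by (simp add: G_def fps_inv_def)
  have GP: "G oo PP al = fps_X" unfolding G_def by (rule fps_inv) simp_all
  have hK: "K oo PP al = Y"
    unfolding K_def using fps_compose_assoc[of "PP al" G Y] G0 GP by simp
  have Xc: "fps_X ^ j oo PP al = PP al ^ j" for j
    using fps_compose_power[of "PP al" fps_X j] by simp
  have "Y = ((\<Sum>j<Suc n. fps_const (K $ j) * fps_X ^ j) + fps_X ^ Suc n * fps_shift (Suc n) K) oo PP al"
    using hK fps_split_at[of K n] by simp
  also have "\<dots> = (\<Sum>j<Suc n. fps_const (K $ j) * PP al ^ j) + PP al ^ Suc n * (fps_shift (Suc n) K oo PP al)"
    by (simp add: fps_compose_add_distrib fps_compose_sum_distrib fps_compose_mult_distrib Xc)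
  finally have Ye: "Y = \<dots>" .
  have "Phi al n Y = (\<Sum>j<Suc n. K $ j * Phi al n (PP al ^ j))"
    by (subst Ye) (simp add: Phi_add Phi_sum Phi_cmult Phi_tail[unfolded power_Suc])
  also have "\<dots> = K $ n * of_nat n"
    using Phi_pow_less[of _ n al] by (simp add: Phi_pow_eq[OF n])
  finally show ?thesis by (simp add: K_def G_def)
qed


definition GG :: "real \<Rightarrow> real fps" where "GG al = fps_inv (PP al)"
definition LL :: "real fps" where "LL = Abs_fps (\<lambda>m. if m = 0 then 0 else 1 / of_nat m)"
definition CC :: "real \<Rightarrow> real fps" where "CC al = LL oo GG al"

lemma GG_0 [simp]: "GG al $ 0 = 0" by (simp add: GG_def fps_inv_def)

lemma GG_eq: "GG al = fps_X * (Ep al oo GG al)"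
proof -
  have "PP al oo GG al = fps_X" unfolding GG_def by (rule fps_inv_right) simp_all
  then have h1: "GG al * (Ep (-al) oo GG al) = fps_X"
    by (simp add: PP_def fps_compose_mult_distrib)
  have h2: "(Ep (-al) oo GG al) * (Ep al oo GG al) = 1"
    by (simp add: fps_compose_mult_distrib[symmetric] Ep_mult Ep_0)
  have "GG al = GG al * ((Ep (-al) oo GG al) * (Ep al oo GG al))" by (simp add: h2)
  also have "\<dots> = fps_X * (Ep al oo GG al)" by (simp only: mult.assoc[symmetric] h1)
  finally show ?thesis .
qed

lemma GG_coeff:
  assumes "n \<ge> 1"
  shows "of_nat n * GG al $ n = Ep (of_nat n * al) $ (n - 1)"
proof -
  have "of_nat n * GG al $ n = Phi al n fps_X"
    using lagrange[of fps_X n al] assms GG_0[of al, unfolded GG_def] by (simp add: GG_def)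
  also have "\<dots> = (1 * Ep (of_nat n * al)) $ (n - 1)"
    using res_shift[OF assms, of 1 "Ep (of_nat n * al)"]
    by (simp add: Phi_def ipl_power del: fls_residue_def)
  finally show ?thesis by simp
qed

lemma GG_nonneg: assumes "al \<ge> 0" shows "GG al $ n \<ge> 0"
proof (cases n)
  case 0 then show ?thesis by simp
next
  case (Suc m)
  then have "of_nat n * GG al $ n \<ge> 0" using GG_coeff[of n al] Ep_nonneg[of "of_nat n * al"] assms by simp
  then show ?thesis using Suc by (simp add: zero_le_mult_iff)
qed

lemma LL_deriv: "fps_deriv LL = Ep 1"
  by (rule fps_ext) (simp add: LL_def Ep_nth pochhammer_fact[symmetric] del: of_nat_Suc)

lemma LL_nonneg: "LL $ n \<ge> 0" by (simp add: LL_def)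

lemma CC_coeff:
  assumes "n \<ge> 1"
  shows "CC al $ n = pochhammer (al * of_nat n + 1) (n - 1) / fact n"
proof -
  have "of_nat n * CC al $ n = Phi al n LL"
    using lagrange[of LL n al] assms by (simp add: GG_def CC_def LL_def)
  also have "\<dots> = (Ep 1 * Ep (of_nat n * al)) $ (n - 1)"
    using res_shift[OF assms, of "Ep 1" "Ep (of_nat n * al)"]
    by (simp add: Phi_def ipl_power fls_deriv_fps_to_fls LL_deriv del: fls_residue_def)
  also have "\<dots> = pochhammer (al * of_nat n + 1) (n - 1) / fact (n - 1)"
    by (simp add: Ep_mult Ep_nth algebra_simps)
  finally have "of_nat n * CC al $ n = pochhammer (al * of_nat n + 1) (n - 1) / fact (n - 1)" .
  moreover have "fact n = of_nat n * (fact (n - 1) :: real)"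
    using assms fact_reduce[of n] by simp
  ultimately show ?thesis using assms by (simp add: field_simps)
qed



lemma fps_mult_mono:
  fixes F F' H H' :: "real fps"
  assumes "\<And>n. 0 \<le> F $ n" "\<And>n. F $ n \<le> F' $ n" "\<And>n. 0 \<le> H $ n" "\<And>n. H $ n \<le> H' $ n"
  shows "0 \<le> (F * H) $ n \<and> (F * H) $ n \<le> (F' * H') $ n"
proof
  show "0 \<le> (F * H) $ n" unfolding fps_mult_nth using assms by (intro sum_nonneg mult_nonneg_nonneg) auto
  show "(F * H) $ n \<le> (F' * H') $ n" unfolding fps_mult_nth
    using assms by (intro sum_mono mult_mono) (auto intro: order_trans)
qed

lemma fps_pow_mono:
  fixes F F' :: "real fps"
  assumes "\<And>n. 0 \<le> F $ n" "\<And>n. F $ n \<le> F' $ n"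
  shows "0 \<le> (F ^ k) $ n \<and> (F ^ k) $ n \<le> (F' ^ k) $ n"
proof (induction k arbitrary: n)
  case 0 then show ?case by simp
next
  case (Suc k)
  show ?case unfolding power_Suc
    by (rule fps_mult_mono) (use assms Suc in auto)
qed

lemma fps_pow_agree:
  fixes F F' :: "real fps"
  assumes "\<And>j. j \<le> n \<Longrightarrow> F $ j = F' $ j"
  shows "m \<le> n \<Longrightarrow> (F ^ k) $ m = (F' ^ k) $ m"
proof (induction k arbitrary: m)
  case 0 then show ?case by simp
next
  case (Suc k)
  show ?case unfolding power_Suc fps_mult_nth
    by (intro sum.cong refl) (use assms Suc in auto)
qed

definition tp :: "real fps \<Rightarrow> nat \<Rightarrow> real poly" where
  "tp B N = (\<Sum>j<N. monom (B $ j) j)"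

lemma coeff_tp: "coeff (tp B N) j = (if j < N then B $ j else 0)"
  by (simp add: tp_def coeff_sum)

lemma poly_tp: "poly (tp B N) t = (\<Sum>j<N. B $ j * t ^ j)"
  by (simp add: tp_def poly_sum poly_monom)

lemma poly_as_sum:
  fixes q :: "real poly"
  assumes "degree q < D"
  shows "poly q t = (\<Sum>i<D. coeff q i * t ^ i)"
proof -
  have "poly q t = (\<Sum>i\<le>degree q. coeff q i * t ^ i)" by (rule poly_altdef)
  also have "\<dots> = (\<Sum>i<D. coeff q i * t ^ i)"
    using assms by (intro sum.mono_neutral_left) (auto simp: coeff_eq_0)
  finally show ?thesis .
qed

lemma partial_le_poly:
  fixes q :: "real poly"
  assumes "\<And>i. coeff q i \<ge> 0" "t \<ge> 0"
  shows "(\<Sum>i<N. coeff q i * t ^ i) \<le> poly q t"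
proof -
  have "(\<Sum>i<N. coeff q i * t ^ i) \<le> (\<Sum>i<max N (Suc (degree q)). coeff q i * t ^ i)"
    using assms by (intro sum_mono2) auto
  also have "\<dots> = poly q t" by (rule poly_as_sum[symmetric]) simp
  finally show ?thesis .
qed

lemma tp_pow_le:
  fixes B :: "real fps"
  assumes "\<And>n. 0 \<le> B $ n"
  shows "0 \<le> coeff (tp B N ^ k) n \<and> coeff (tp B N ^ k) n \<le> (B ^ k) $ n"
  using fps_pow_mono[of "fps_of_poly (tp B N)" B k n] assms
  by (simp add: fps_of_poly_power[symmetric] coeff_tp)

lemma tp_pow_agree:
  fixes B :: "real fps"
  assumes "n < N"
  shows "coeff (tp B N ^ k) n = (B ^ k) $ n"
  using fps_pow_agree[of n "fps_of_poly (tp B N)" B n k] assms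
  by (simp add: fps_of_poly_power[symmetric] coeff_tp)

lemma comp_upper:
  fixes A B :: "real fps"
  assumes A: "\<And>n. 0 \<le> A $ n" and B: "\<And>n. 0 \<le> B $ n" and t: "t \<ge> 0"
  shows "(\<Sum>n<N. (A oo B) $ n * t ^ n) \<le> (\<Sum>k<N. A $ k * (\<Sum>j<N. B $ j * t ^ j) ^ k)"
proof -
  have "(\<Sum>n<N. (A oo B) $ n * t ^ n) = (\<Sum>n<N. \<Sum>k\<in>{0..n}. A $ k * (B ^ k) $ n * t ^ n)"
    by (simp add: fps_compose_nth sum_distrib_right)
  also have "\<dots> \<le> (\<Sum>n<N. \<Sum>k<N. A $ k * (B ^ k) $ n * t ^ n)"
    using A B t fps_pow_mono[of B B] by (intro sum_mono sum_mono2) (auto intro!: mult_nonneg_nonneg)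
  also have "\<dots> = (\<Sum>n<N. \<Sum>k<N. A $ k * coeff (tp B N ^ k) n * t ^ n)"
    by (intro sum.cong refl) (simp add: tp_pow_agree)
  also have "\<dots> = (\<Sum>k<N. A $ k * (\<Sum>n<N. coeff (tp B N ^ k) n * t ^ n))"
    by (subst sum.swap) (simp add: sum_distrib_left mult.assoc)
  also have "\<dots> \<le> (\<Sum>k<N. A $ k * poly (tp B N ^ k) t)"
    using A tp_pow_le[OF B] t by (intro sum_mono mult_left_mono partial_le_poly) auto
  also have "\<dots> = (\<Sum>k<N. A $ k * (\<Sum>j<N. B $ j * t ^ j) ^ k)"
    by (simp add: poly_power poly_tp)
  finally show ?thesis .
qed

lemma comp_lower:
  fixes A B :: "real fps"
  assumes A: "\<And>n. 0 \<le> A $ n" and B: "\<And>n. 0 \<le> B $ n" and B0: "B $ 0 = 0" and t: "t \<ge> 0"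
  shows "\<exists>N. (\<Sum>k<K. A $ k * (\<Sum>j<M. B $ j * t ^ j) ^ k) \<le> (\<Sum>n<N. (A oo B) $ n * t ^ n)"
proof -
  define T where "T = tp B M"
  define N where "N = Suc (K * degree T)"
  have dg: "degree (T ^ k) < N" if "k < K" for k
  proof -
    have "degree (T ^ k) \<le> degree T * k" by (rule degree_power_le)
    also have "\<dots> \<le> K * degree T" using that by (simp add: mult.commute)
    finally show ?thesis by (simp add: N_def)
  qed
  have "(\<Sum>k<K. A $ k * (\<Sum>j<M. B $ j * t ^ j) ^ k) = (\<Sum>k<K. A $ k * poly (T ^ k) t)"
    by (simp add: poly_power poly_tp T_def)
  also have "\<dots> = (\<Sum>k<K. A $ k * (\<Sum>n<N. coeff (T ^ k) n * t ^ n))"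
    by (intro sum.cong refl, subst poly_as_sum[OF dg]) auto
  also have "\<dots> \<le> (\<Sum>k<K. A $ k * (\<Sum>n<N. (B ^ k) $ n * t ^ n))"
    using A t tp_pow_le[OF B, of M] unfolding T_def
    by (intro sum_mono mult_left_mono mult_right_mono) auto
  also have "\<dots> = (\<Sum>n<N. \<Sum>k<K. A $ k * (B ^ k) $ n * t ^ n)"
    by (subst sum.swap) (simp add: sum_distrib_left mult.assoc)
  also have "\<dots> \<le> (\<Sum>n<N. \<Sum>k\<in>{0..n}. A $ k * (B ^ k) $ n * t ^ n)"
  proof (intro sum_mono)
    fix n
    have z: "(B ^ k) $ n = 0" if "n < k" for k using startsby_zero_power_prefix[OF B0] that by blast
    have "(\<Sum>k<K. A $ k * (B ^ k) $ n * t ^ n) = (\<Sum>k\<in>{..<K} \<inter> {0..n}. A $ k * (B ^ k) $ n * t ^ n)"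
      by (intro sum.mono_neutral_right) (auto simp: z)
    also have "\<dots> \<le> (\<Sum>k\<in>{0..n}. A $ k * (B ^ k) $ n * t ^ n)"
      using A B t fps_pow_mono[of B B] by (intro sum_mono2) (auto intro!: mult_nonneg_nonneg)
    finally show "(\<Sum>k<K. A $ k * (B ^ k) $ n * t ^ n) \<le> (\<Sum>k\<in>{0..n}. A $ k * (B ^ k) $ n * t ^ n)" .
  qed
  also have "\<dots> = (\<Sum>n<N. (A oo B) $ n * t ^ n)"
    by (simp add: fps_compose_nth sum_distrib_right)
  finally show ?thesis by blast
qed


lemma comp_nonneg:
  fixes A B :: "real fps"
  assumes A: "\<And>n. 0 \<le> A $ n" and B: "\<And>n. 0 \<le> B $ n"
  shows "0 \<le> (A oo B) $ n"
  unfolding fps_compose_nth using A B fps_pow_mono[of B B]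
  by (intro sum_nonneg mult_nonneg_nonneg) auto

lemma comp_sums:
  fixes A B :: "real fps"
  assumes A: "\<And>n. 0 \<le> A $ n" and B: "\<And>n. 0 \<le> B $ n" and B0: "B $ 0 = 0" and t: "t \<ge> 0"
    and Bs: "(\<lambda>n. B $ n * t ^ n) sums b" and As: "summable (\<lambda>k. A $ k * b ^ k)"
  shows "(\<lambda>n. (A oo B) $ n * t ^ n) sums (\<Sum>k. A $ k * b ^ k)"
proof -
  define a where "a = (\<Sum>k. A $ k * b ^ k)"
  have Bnn: "0 \<le> B $ n * t ^ n" for n using B t by simp
  have pB: "(\<Sum>j<N. B $ j * t ^ j) \<le> b" for N
    using sum_le_suminf[OF sums_summable[OF Bs], of "{..<N}"] Bnn sums_unique[OF Bs] by auto
  have pB0: "0 \<le> (\<Sum>j<N. B $ j * t ^ j)" for N using Bnn by (intro sum_nonneg) auto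
  have Ann: "0 \<le> A $ k * b ^ k" for k using A pB0[of 0] pB[of 0] by simp
  have cnn: "0 \<le> (A oo B) $ n * t ^ n" for n using comp_nonneg[OF A B] t by simp
  have up: "(\<Sum>n<N. (A oo B) $ n * t ^ n) \<le> a" for N
  proof -
    have "(\<Sum>n<N. (A oo B) $ n * t ^ n) \<le> (\<Sum>k<N. A $ k * (\<Sum>j<N. B $ j * t ^ j) ^ k)"
      by (rule comp_upper[OF A B t])
    also have "\<dots> \<le> (\<Sum>k<N. A $ k * b ^ k)"
      using A pB pB0 by (intro sum_mono mult_left_mono power_mono) auto
    also have "\<dots> \<le> a" unfolding a_def using Ann by (intro sum_le_suminf[OF As]) auto
    finally show ?thesis .
  qed
  have cs: "summable (\<lambda>n. (A oo B) $ n * t ^ n)" by (rule summableI_nonneg_bounded[OF cnn up])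
  define c where "c = (\<Sum>n. (A oo B) $ n * t ^ n)"
  have c_le: "c \<le> a" unfolding c_def by (rule suminf_le_const[OF cs up])
  have lowK: "(\<Sum>k<K. A $ k * b ^ k) \<le> c" for K
  proof -
    have lim: "(\<lambda>M. \<Sum>k<K. A $ k * (\<Sum>j<M. B $ j * t ^ j) ^ k) \<longlonglongrightarrow> (\<Sum>k<K. A $ k * b ^ k)"
      using Bs unfolding sums_def by (intro tendsto_intros)
    have "(\<Sum>k<K. A $ k * (\<Sum>j<M. B $ j * t ^ j) ^ k) \<le> c" for M
    proof -
      obtain N where "(\<Sum>k<K. A $ k * (\<Sum>j<M. B $ j * t ^ j) ^ k) \<le> (\<Sum>n<N. (A oo B) $ n * t ^ n)"
        using comp_lower[OF A B B0 t] by blast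
      also have "\<dots> \<le> c" unfolding c_def using cnn by (intro sum_le_suminf[OF cs]) auto
      finally show ?thesis .
    qed
    then show ?thesis using lim by (intro LIMSEQ_le_const2[OF lim]) auto
  qed
  have "a \<le> c" unfolding a_def by (rule suminf_le_const[OF As lowK])
  then have "c = a" using c_le by simp
  then show ?thesis using summable_sums[OF cs] by (simp add: c_def a_def)
qed



lemma Ep_sums:
  assumes "0 \<le> g" "g < 1"
  shows "(\<lambda>k. Ep al $ k * g ^ k) sums ((1 - g) powr (- al))"
proof -
  have "(\<lambda>k. ((- al) gchoose k) * (- g) ^ k) sums ((1 + - g) powr (- al))"
    using assms by (intro gen_binomial_real) auto
  moreover have "((- al) gchoose k) * (- g) ^ k = Ep al $ k * g ^ k" for k
    by (simp add: Ep_gchoose power_minus[of g])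
  ultimately show ?thesis by simp
qed

lemma LL_sums:
  assumes "0 \<le> g" "g < 1"
  shows "(\<lambda>k. LL $ k * g ^ k) sums (- ln (1 - g))"
proof -
  have "(\<lambda>n. - ((-(-g))^n) / of_nat n) sums ln (1 + - g)"
    using assms by (intro ln_series') auto
  then have "(\<lambda>n. - (- ((-(-g))^n) / of_nat n)) sums (- ln (1 + - g))"
    by (rule sums_minus)
  moreover have "- (- ((-(-g))^n) / of_nat n) = LL $ n * g ^ n" for n
    by (simp add: LL_def)
  ultimately show ?thesis by simp
qed

lemma psi_strict:
  fixes al g w :: real
  assumes al: "al > 0" and g: "0 \<le> g" "g < w" and w: "w \<le> 1 / (1 + al)"
  shows "g * (1 - g) powr al < w * (1 - w) powr al"
proof (cases "g = 0")
  case True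
  have "w < 1" using w al g by (smt (verit) divide_less_eq_1_pos)
  then show ?thesis using True g by simp
next
  case False
  have w1: "w < 1" using w al g by (smt (verit) divide_less_eq_1_pos)
  have gp: "g > 0" using False g by simp
  have wp: "w > 0" using g by simp
  define r where "r = g / w"
  define s where "s = (1 - g) / (1 - w)"
  have rp: "r > 0" using gp wp by (simp add: r_def)
  have s1: "s - 1 > 0" using g w1 by (simp add: s_def field_simps)
  have lr: "ln r \<le> r - 1" using rp by (rule ln_le_minus_one)
  have ls: "ln s < s - 1" using ln_add_one_self_less_self[OF s1] by simp
  have key: "(r - 1) + al * (s - 1) \<le> 0"
  proof -
    have "(r - 1) + al * (s - 1) = (w - g) * (al * w - (1 - w)) / (w * (1 - w))"
      using wp w1 by (simp add: r_def s_def field_simps)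
    moreover have "al * w - (1 - w) \<le> 0" using w al by (simp add: field_simps)
    moreover have "w - g \<ge> 0" "w * (1 - w) > 0" using g wp w1 by auto
    ultimately show ?thesis by (simp add: divide_nonpos_pos mult_nonneg_nonpos)
  qed
  have "ln r + al * ln s < 0" using lr ls key al
    by (smt (verit) mult_strict_left_mono)
  then have "ln (r * s powr al) < 0"
    using rp s1 by (simp add: ln_mult ln_powr)
  then have "r * s powr al < 1" using rp s1 by (simp add: ln_less_zero_iff)
  then have "(g / w) * ((1 - g) powr al / (1 - w) powr al) < 1"
    using g w1 by (simp add: r_def s_def powr_divide)
  then show ?thesis using wp w1 by (simp add: field_simps)
qed

lemma main_w:
  fixes al w t :: real
  assumes al: "al > 0" and w0: "0 \<le> w" and w1: "w \<le> 1 / (1 + al)"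
    and t: "t = w * (1 - w) powr al"
  shows "(\<lambda>n. CC al $ n * t ^ n) sums (- ln (1 - w))"
proof -
  have wl1: "w < 1" using w1 al w0 by (smt (verit) divide_less_eq_1_pos)
  have t0: "t \<ge> 0" using t w0 wl1 by simp
  have Ep_nn: "\<And>n. 0 \<le> Ep al $ n" using al by (intro Ep_nonneg) simp
  have G_nn: "\<And>n. 0 \<le> GG al $ n" using al by (intro GG_nonneg) simp
  have Gsuc: "GG al $ Suc n = (Ep al oo GG al) $ n" for n
    by (subst GG_eq) simp
  have tw: "t * (1 - w) powr (- al) = w"
    using wl1 by (simp add: t powr_minus field_simps)
  have part: "(\<Sum>n<N. GG al $ n * t ^ n) \<le> w" for N
  proof (induction N)
    case 0 then show ?case using w0 by simp
  next
    case (Suc N)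
    have "(\<Sum>n<Suc N. GG al $ n * t ^ n) = t * (\<Sum>n<N. (Ep al oo GG al) $ n * t ^ n)"
      by (simp add: sum.lessThan_Suc_shift Gsuc sum_distrib_left algebra_simps del: sum.lessThan_Suc)
    also have "\<dots> \<le> t * (\<Sum>k<N. Ep al $ k * (\<Sum>j<N. GG al $ j * t ^ j) ^ k)"
      using comp_upper[OF Ep_nn G_nn t0] t0 by (intro mult_left_mono) auto
    also have "\<dots> \<le> t * (\<Sum>k<N. Ep al $ k * w ^ k)"
      using Suc.IH t0 Ep_nn G_nn
      by (intro mult_left_mono sum_mono power_mono) (auto intro!: sum_nonneg)
    also have "\<dots> \<le> t * (1 - w) powr (- al)"
      using sum_le_suminf[OF sums_summable[OF Ep_sums[OF w0 wl1]], of "{..<N}"]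
        sums_unique[OF Ep_sums[OF w0 wl1, of al]] Ep_nn w0 t0
      by (intro mult_left_mono) auto
    also have "\<dots> = w" by (rule tw)
    finally show ?case .
  qed
  have Gnn: "0 \<le> GG al $ n * t ^ n" for n using G_nn t0 by simp
  have Gsum: "summable (\<lambda>n. GG al $ n * t ^ n)" by (rule summableI_nonneg_bounded[OF Gnn part])
  define g where "g = (\<Sum>n. GG al $ n * t ^ n)"
  have gw: "g \<le> w" unfolding g_def by (rule suminf_le_const[OF Gsum part])
  have g0: "0 \<le> g" unfolding g_def using Gnn by (intro suminf_nonneg[OF Gsum]) auto
  have gl1: "g < 1" using gw wl1 by simp
  have Gs: "(\<lambda>n. GG al $ n * t ^ n) sums g" using Gsum by (simp add: g_def summable_sums)
  have EGs: "(\<lambda>n. (Ep al oo GG al) $ n * t ^ n) sums ((1 - g) powr (- al))"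
    using comp_sums[OF Ep_nn G_nn GG_0 t0 Gs] sums_summable[OF Ep_sums[OF g0 gl1, of al]]
      sums_unique[OF Ep_sums[OF g0 gl1, of al]] by simp
  have "(\<lambda>n. GG al $ Suc n * t ^ Suc n) sums g"
    using Gs by (subst sums_Suc_iff) simp
  moreover have "(\<lambda>n. GG al $ Suc n * t ^ Suc n) sums (t * (1 - g) powr (- al))"
    using sums_mult[OF EGs, of t] by (simp add: Gsuc algebra_simps)
  ultimately have geq: "g = t * (1 - g) powr (- al)" using sums_unique2 by blast
  have "g * (1 - g) powr al = t"
    using geq gl1 by (simp add: powr_minus field_simps)
  then have "g * (1 - g) powr al = w * (1 - w) powr al" using t by simp
  then have gw_eq: "g = w"
    using psi_strict[OF al g0 _ w1] gw by fastforce
  have "(\<lambda>n. (LL oo GG al) $ n * t ^ n) sums (\<Sum>k. LL $ k * g ^ k)"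
    using comp_sums[OF LL_nonneg G_nn GG_0 t0 Gs] sums_summable[OF LL_sums[OF g0 gl1]] by simp
  then show ?thesis using sums_unique[OF LL_sums[OF g0 gl1]] gw_eq by (simp add: CC_def)
qed



lemma psi_max:
  fixes al u :: real
  assumes al: "al > 0" and u: "0 \<le> u" "u < 1"
  shows "u * (1 - u) powr al \<le> (1 / (1 + al)) * (1 - 1 / (1 + al)) powr al"
proof (cases "u = 0")
  case True then show ?thesis using al by simp
next
  case False
  define ws where "ws = 1 / (1 + al)"
  have ws0: "0 < ws" "ws < 1" using al by (auto simp: ws_def)
  have up: "u > 0" using False u by simp
  define r where "r = u / ws"
  define s where "s = (1 - u) / (1 - ws)"
  have rp: "r > 0" "s > 0" using up ws0 u by (auto simp: r_def s_def)
  have "ln r + al * ln s \<le> (r - 1) + al * (s - 1)"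
    using ln_le_minus_one[OF rp(1)] ln_le_minus_one[OF rp(2)] al by (smt (verit) mult_left_mono)
  also have "(r - 1) + al * (s - 1) = 0"
    using al ws0 by (simp add: r_def s_def ws_def field_simps)
  finally have "ln (r * s powr al) \<le> 0" using rp by (simp add: ln_mult ln_powr)
  then have "r * s powr al \<le> 1" using rp by simp
  then have "(u / ws) * ((1 - u) powr al / (1 - ws) powr al) \<le> 1"
    using u ws0 by (simp add: r_def s_def powr_divide)
  then show ?thesis using ws0 by (simp add: ws_def[symmetric] field_simps)
qed

lemma conv_w:
  fixes a b y :: real
  assumes "0 < a" "a < b" "y > 0"
  defines "w \<equiv> 1 - y powr (b - a)"
  shows "w * (1 - w) powr (a / (b - a)) = phi a b y" and "ln (1 - w) = (b - a) * ln y"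
proof -
  have "(1 - w) powr (a / (b - a)) = y powr a"
    using assms by (simp add: w_def powr_powr)
  moreover have "y powr (b - a) * y powr a = y powr b" by (simp add: powr_add[symmetric])
  ultimately show "w * (1 - w) powr (a / (b - a)) = phi a b y"
    by (simp add: w_def phi_def algebra_simps)
  show "ln (1 - w) = (b - a) * ln y" using assms by (simp add: w_def ln_powr)
qed

lemma x0_props:
  fixes a b :: real
  assumes "0 < a" "a < b"
  shows "0 < x0 a b" "x0 a b \<le> 1" "x0 a b powr (b - a) = a / b"
proof -
  show "0 < x0 a b" using assms by (simp add: x0_def)
  have "(a / b) powr (1 / (b - a)) \<le> 1 powr (1 / (b - a))"
    using assms by (intro powr_mono2) auto
  then show "x0 a b \<le> 1" by (simp add: x0_def)
  show "x0 a b powr (b - a) = a / b" using assms by (simp add: x0_def powr_powr)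
qed

lemma key_series:
  fixes a b y :: real
  assumes ab: "0 < a" "a < b" and y: "x0 a b \<le> y" "y \<le> 1"
  shows "(\<lambda>n. CC (a / (b - a)) $ n * (phi a b y) ^ n) sums ((b - a) * - ln y)"
proof -
  define al where "al = a / (b - a)"
  define w where "w = 1 - y powr (b - a)"
  have y0: "y > 0" using x0_props(1)[OF ab] y by simp
  have al0: "al > 0" using ab by (simp add: al_def)
  have "y powr (b - a) \<le> 1 powr (b - a)" using y y0 ab by (intro powr_mono2) auto
  then have w0: "0 \<le> w" by (simp add: w_def)
  have "x0 a b powr (b - a) \<le> y powr (b - a)" using y x0_props(1)[OF ab] ab by (intro powr_mono2) auto
  then have "a / b \<le> y powr (b - a)" using x0_props(3)[OF ab] by simp
  moreover have "1 / (1 + al) = 1 - a / b" using ab by (simp add: al_def field_simps)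
  ultimately have w1: "w \<le> 1 / (1 + al)" by (simp add: w_def)
  have "(\<lambda>n. CC al $ n * (w * (1 - w) powr al) ^ n) sums (- ln (1 - w))"
    by (rule main_w[OF al0 w0 w1 refl])
  then show ?thesis using conv_w[OF ab y0] by (simp add: al_def w_def)
qed


theorem proposition6:
  fixes a b x :: real
  assumes "0 < a" "a < b" "0 \<le> x" "x \<le> 1"
  shows "summable (\<lambda>n. \<bar>series_term a b x (Suc n)\<bar>)
    \<and> - ln (g_ab a b x) = 1 / (b - a) * (\<Sum>n. series_term a b x (Suc n))
    \<and> (x0 a b \<le> x \<longrightarrow> 1 / (b - a) * (\<Sum>n. series_term a b x (Suc n)) = - ln x)
    \<and> (x \<le> x0 a b \<longrightarrow> 1 / (b - a) * (\<Sum>n. series_term a b x (Suc n)) = - ln (f_ab a b x))"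
proof -
  note ab = assms(1,2)
  define al where "al = a / (b - a)"
  define t where "t = phi a b x"
  have al0: "al > 0" using ab by (simp add: al_def)
  have c0: "b - a > 0" using ab by simp
  have wsx: "1 - x0 a b powr (b - a) = 1 / (1 + al)"
    using x0_props(3)[OF ab] ab by (simp add: al_def field_simps)
  have px0: "phi a b (x0 a b) = (1 / (1 + al)) * (1 - 1 / (1 + al)) powr al"
    using conv_w(1)[OF ab x0_props(1)[OF ab]] wsx by (simp add: al_def)
  have px0_nn: "0 \<le> phi a b (x0 a b)" using px0 al0 by simp
  have t_bounds: "0 \<le> t \<and> t \<le> phi a b (x0 a b)"
  proof (cases "x = 0")
    case True then show ?thesis using ab px0_nn by (simp add: t_def phi_def)
  next
    case False
    then have xp: "x > 0" using assms by simp
    define u where "u = 1 - x powr (b - a)"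
    have "x powr (b - a) \<le> 1 powr (b - a)" using assms xp by (intro powr_mono2) auto
    then have u0: "0 \<le> u" by (simp add: u_def)
    have u1: "u < 1" using xp by (simp add: u_def)
    have tu: "t = u * (1 - u) powr al"
      using conv_w(1)[OF ab xp] by (simp add: t_def u_def al_def)
    show ?thesis using psi_max[OF al0 u0 u1] px0 tu u0 u1 by simp
  qed
  have cont: "continuous_on {x0 a b..1} (phi a b)"
  proof -
    have "continuous_on {x0 a b..1} (\<lambda>y. y powr a - y powr b)"
      using x0_props(1)[OF ab] by (intro continuous_intros) auto
    then show ?thesis by (simp add: phi_def[abs_def])
  qed
  have "phi a b 1 = 0" by (simp add: phi_def)
  then obtain y where y: "x0 a b \<le> y" "y \<le> 1" "phi a b y = t"
    using IVT2'[of "phi a b" 1 t "x0 a b"] t_bounds cont x0_props(2)[OF ab] by auto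
  then have tim: "t \<in> phi a b ` {x0 a b..1}" by auto
  define gx where "gx = g_ab a b x"
  have gx: "gx \<in> {x0 a b..1}" "phi a b gx = t"
    using inv_into_into[OF tim] f_inv_into_f[OF tim] by (simp_all add: gx_def g_ab_def rinv_def t_def)
  have hterm: "series_term a b x (Suc n) = CC al $ Suc n * t ^ Suc n" for n
    by (simp add: series_term_def CC_coeff al_def t_def phi_def mult.commute)
  have CC0: "CC al $ 0 = 0" by (simp add: CC_def LL_def)
  have CCnn: "CC al $ n \<ge> 0" for n
    unfolding CC_def using al0 by (intro comp_nonneg LL_nonneg GG_nonneg) simp
  have ser: "(\<lambda>n. series_term a b x (Suc n)) sums ((b - a) * - ln y)"
    if "x0 a b \<le> y" "y \<le> 1" "phi a b y = t" for y
  proof -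
    have "(\<lambda>n. CC al $ n * t ^ n) sums ((b - a) * - ln y)"
      using key_series[OF ab that(1,2)] that(3) by (simp add: al_def)
    then have "(\<lambda>n. CC al $ Suc n * t ^ Suc n) sums ((b - a) * - ln y)"
      by (subst sums_Suc_iff) (simp add: CC0)
    then show ?thesis by (simp add: hterm)
  qed
  have S1: "(\<lambda>n. series_term a b x (Suc n)) sums ((b - a) * - ln gx)"
    using ser gx by auto
  have S1': "1 / (b - a) * (\<Sum>n. series_term a b x (Suc n)) = - ln gx"
    using sums_unique[OF S1] c0 by (simp add: field_simps)
  have nn: "series_term a b x (Suc n) \<ge> 0" for n
    using CCnn t_bounds by (simp add: hterm)
  have summ: "summable (\<lambda>n. \<bar>series_term a b x (Suc n)\<bar>)"
    using sums_summable[OF S1] nn by simp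
  have cl3: "1 / (b - a) * (\<Sum>n. series_term a b x (Suc n)) = - ln x" if "x0 a b \<le> x"
  proof -
    have "(\<lambda>n. series_term a b x (Suc n)) sums ((b - a) * - ln x)"
      using ser[OF that assms(4)] by (simp add: t_def)
    from sums_unique[OF this] show ?thesis using c0 by (simp add: field_simps)
  qed
  have cl4: "f_ab a b x = g_ab a b x" if "x \<le> x0 a b"
    using that by (simp add: f_ab_def g_ab_def)
  show ?thesis using summ S1' cl3 cl4 by (simp add: gx_def)
qed


end
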